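(* Let $G$ be a cyclic group of order $n\ge 4$. Then $\{2,n-2,n-1\}\in\mathcal L(G)$.
   Context: For a finite abelian group $G$, a sequence over $G$ is an element of the free abelian monoid $\mathcal F(G)$ with basis $G$ (a finite unordered list of elements of $G$, repetitions allowed). $\mathcal B(G)$ is the monoid of zero-sum sequences over $G$ (including the empty sequence). An atom is a minimal zero-sum sequence, i.e. a nonempty zero-sum sequence that is not a product of two nonempty zero-sum sequences. For $B\in\mathcal B(G)$, $\mathsf L(B)=\{k\in\mathbb N_0: B \text{ is a product of } k \text{ atoms}\}$, and $\mathcal L(G)=\{\mathsf L(B):B\in\mathcal B(G)\}$. *)

theory Defs
  imports "HOL-Algebra.Elementary_Groups" "HOL-Algebra.FiniteProduct" "HOL-Library.Multiset"
begin

text \<open>Sequences over G are finite multisets of elements of carrier G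
  (elements of the free abelian monoid with basis G).\<close>

definition seq_over :: "('a, 'b) monoid_scheme \<Rightarrow> 'a multiset \<Rightarrow> bool" where
  "seq_over G S \<longleftrightarrow> set_mset S \<subseteq> carrier G"

definition seq_sum :: "('a, 'b) monoid_scheme \<Rightarrow> 'a multiset \<Rightarrow> 'a" where
  "seq_sum G S = finprod G (\<lambda>g. g [^]\<^bsub>G\<^esub> count S g) (set_mset S)"

definition zero_sum :: "('a, 'b) monoid_scheme \<Rightarrow> 'a multiset \<Rightarrow> bool" where
  "zero_sum G S \<longleftrightarrow> seq_over G S \<and> seq_sum G S = \<one>\<^bsub>G\<^esub>"

definition is_atom :: "('a, 'b) monoid_scheme \<Rightarrow> 'a multiset \<Rightarrow> bool" where
  "is_atom G A \<longleftrightarrow> zero_sum G A \<and> A \<noteq> {#} \<and>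
     \<not> (\<exists>U V. A = U + V \<and> U \<noteq> {#} \<and> V \<noteq> {#} \<and> zero_sum G U \<and> zero_sum G V)"

definition lengths :: "('a, 'b) monoid_scheme \<Rightarrow> 'a multiset \<Rightarrow> nat set" where
  "lengths G B = {k. \<exists>F :: 'a multiset multiset. size F = k \<and> (\<forall>A\<in>#F. is_atom G A) \<and> sum_mset F = B}"

definition system_of_lengths :: "('a, 'b) monoid_scheme \<Rightarrow> nat set set" where
  "system_of_lengths G = {lengths G B | B. zero_sum G B}"

end

theory Submission
  imports Defs "HOL-Algebra.Multiplicative_Group"
begin

lemma (in comm_group) seq_sum_add:
  assumes "seq_over G S" "x \<in> carrier G"
  shows "seq_sum G (add_mset x S) = x \<otimes> seq_sum G S"
proof -
  let ?A = "insert x (set_mset S)"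
  have S: "set_mset S \<subseteq> carrier G" using assms(1) by (simp add: seq_over_def)
  have A: "?A \<subseteq> carrier G" using S assms(2) by auto
  have 1: "seq_sum G S = finprod G (\<lambda>y. y [^] count S y) ?A"
    unfolding seq_sum_def
    by (rule finprod_mono_neutral_cong_right[symmetric]) (use A in \<open>auto simp: Pi_def not_in_iff\<close>)
  have 2: "seq_sum G (add_mset x S) = finprod G (\<lambda>y. (if y = x then x else \<one>) \<otimes> y [^] count S y) ?A"
    unfolding seq_sum_def
    by (rule finprod_cong') (use A in \<open>auto simp: nat_pow_Suc2 nat_pow_mult m_comm\<close>)
  have 3: "finprod G (\<lambda>y. (if y = x then x else \<one>) \<otimes> y [^] count S y) ?A
      = finprod G (\<lambda>y. if y = x then x else \<one>) ?A \<otimes> finprod G (\<lambda>y. y [^] count S y) ?A"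
    by (rule finprod_multf) (use A in \<open>auto simp: Pi_def\<close>)
  have 4: "finprod G (\<lambda>y. if y = x then x else \<one>) ?A = x"
  proof -
    have "finprod G (\<lambda>y. if y = x then x else \<one>) ?A = finprod G (\<lambda>y. if y = x then y else \<one>) ?A"
      by (rule finprod_cong') (use A in auto)
    also have "\<dots> = x"
      using finprod_singleton_swap[of x ?A "\<lambda>y. y"] A by auto
    finally show ?thesis .
  qed
  show ?thesis using 1 2 3 4 by simp
qed

lemma (in comm_group) seq_sum_empty: "seq_sum G {#} = \<one>"
  by (simp add: seq_sum_def)

lemma is_atomI:
  assumes "zero_sum G A" "A \<noteq> {#}"
    "\<And>U. U \<subseteq># A \<Longrightarrow> U \<noteq> {#} \<Longrightarrow> U \<noteq> A \<Longrightarrow> \<not> zero_sum G U"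
  shows "is_atom G A"
  unfolding is_atom_def using assms
  by (metis add_cancel_right_right mset_subset_eq_add_left)

lemma sum_over_set:
  assumes "finite S" "set_mset U \<subseteq> S"
  shows "sum_mset (image_mset w U) = (\<Sum>x\<in>S. of_nat (count U x) * (w x :: int))"
  using assms(2)
proof (induction U)
  case empty then show ?case by simp
next
  case (add y U)
  have yS: "y \<in> S" using add by auto
  have "(\<Sum>x\<in>S. of_nat (count (add_mset y U) x) * w x)
     = (\<Sum>x\<in>S. of_nat (count U x) * w x + (if x = y then w x else 0))"
    by (rule sum.cong) (auto simp: algebra_simps)
  also have "\<dots> = (\<Sum>x\<in>S. of_nat (count U x) * w x) + w y"
    using yS assms(1) by (simp add: sum.distrib sum.delta')
  finally show ?case using add by simp
qed

lemma size_over_set: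
  assumes "finite S" "set_mset U \<subseteq> S"
  shows "size U = (\<Sum>x\<in>S. count U x)"
  using assms(2)
proof (induction U)
  case empty then show ?case by simp
next
  case (add y U)
  have yS: "y \<in> S" using add by auto
  have "(\<Sum>x\<in>S. count (add_mset y U) x) = (\<Sum>x\<in>S. count U x + (if x = y then 1 else 0))"
    by (rule sum.cong) auto
  also have "\<dots> = (\<Sum>x\<in>S. count U x) + 1"
    using yS assms(1) by (simp add: sum.distrib sum.delta')
  finally show ?case using add by simp
qed

lemma subset_size_eq: "U \<subseteq># A \<Longrightarrow> size U = size A \<Longrightarrow> U = A"
  using mset_subset_size subset_mset.le_less by fastforce


lemma int_dvd_range:
  assumes "int n dvd z" "\<bar>z\<bar> \<le> int n" "n > 0"
  shows "z = 0 \<or> z = int n \<or> z = - int n"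
proof -
  obtain t where t: "z = int n * t" using assms(1) by (auto simp: dvd_def)
  have "t \<le> 1"
  proof (rule ccontr)
    assume "\<not> t \<le> 1"
    then have "int n * 2 \<le> int n * t" using assms(3) by (intro mult_left_mono) auto
    then show False using assms t by auto
  qed
  moreover have "t \<ge> -1"
  proof (rule ccontr)
    assume "\<not> t \<ge> -1"
    then have "int n * t \<le> int n * (-2)" using assms(3) by (intro mult_left_mono) auto
    then show False using assms t by auto
  qed
  ultimately have "t = 0 \<or> t = 1 \<or> t = -1" by auto
  then show ?thesis using t by auto
qed

lemma sum_rep: "sum_mset (replicate_mset m {#x,y#}) = replicate_mset m x + replicate_mset m y"
  by (induction m) auto

lemma ar5:
  fixes i j k l n :: nat
  assumes "i \<le> n - 2" "j \<le> n - 2" "k \<le> 1" "l \<le> 1" "4 \<le> n"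
    "\<not> (1 \<le> i \<and> 1 \<le> j)" "\<not> (1 \<le> k \<and> 1 \<le> l)" "0 < i + j + k + l"
    "z = int i - int j + 2 * int k - 2 * int l" "z = 0 \<or> z = int n \<or> z = - int n"
  shows "(i,j,k,l) \<in> {(1,1,0,0),(0,0,1,1),(n-2,0,1,0),(0,2,1,0),(0,n-2,0,1),(2,0,0,1)}"
proof -
  have "k = 0 \<or> k = 1" "l = 0 \<or> l = 1" "i = 0 \<or> j = 0" using assms by auto
  then show ?thesis using assms by (elim disjE) auto
qed

lemma La:
  fixes i j n :: nat
  assumes "i \<le> 1" "j \<le> n - 2" "4 \<le> n" "2 * int i + int j = 0 \<or> 2 * int i + int j = int n \<or> 2 * int i + int j = - int n"
  shows "i = 0 \<and> j = 0 \<or> i = 1 \<and> j = n - 2"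
proof -
  have "i = 0 \<or> i = 1" using assms(1) by auto
  then show ?thesis using assms(2-4) by (elim disjE) auto
qed
lemma Lb:
  fixes i j :: nat
  assumes "i \<le> 1" "j \<le> 2" "2 * int i - int j = 0"
  shows "i = 0 \<and> j = 0 \<or> i = 1 \<and> j = 2"
proof -
  have "i = 0 \<or> i = 1" using assms(1) by auto
  then show ?thesis using assms(2-3) by (elim disjE) auto
qed
lemma Lba: "\<bar>2 * int i - int j\<bar> < int n" if "i \<le> 1" "j \<le> 2" "4 \<le> n" for i j n :: nat
  using that by auto
lemma Lab: "\<bar>2 * int i + int j\<bar> \<le> int n" if "i \<le> 1" "j \<le> n - 2" "4 \<le> n" for i j n :: nat
  using that by auto

lemma arc5:
  fixes n p q u v x y s :: nat
  assumes "4 \<le> n" "int (n-2) = int p + int (n-2) * int u + 2 * int y"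
    "int (n-2) = int p + 2 * int v + int (n-2) * int x"
    "1 = int q + int u + int v" "1 = int q + int x + int y"
    "int s = int p + int q + int u + int v + int x + int y"
  shows "s \<in> {2, n-2, n-1}"
proof -
  have "u = 0 \<or> u = 1" "x = 0 \<or> x = 1" using assms(4,5) by auto
  then show ?thesis using assms by (elim disjE) auto
qed
lemma arc4:
  fixes n p q u v s :: nat
  assumes "2 = int p + 2 * int u" "2 = int p + 2 * int v"
    "2 = 2 * int q + int u + int v"
    "int s = int p + int q + int u + int v"
  shows "s \<in> {2, 3}"
proof -
  have "u = 0 \<or> u = 1" "v = 0 \<or> v = 1" using assms by auto
  then show ?thesis using assms by (elim disjE) auto
qed
lemma ar4:
  fixes i j k :: nat
  assumes "i \<le> 2" "j \<le> 2" "k \<le> 1" "\<not> (1 \<le> i \<and> 1 \<le> j)" "0 < i + j + k"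
    "z = int i - int j + 2 * int k" "z = 0 \<or> z = 4 \<or> z = - 4"
  shows "(i,j,k) \<in> {(1,1,0),(0,0,2),(2,0,1),(0,2,1)}"
proof -
  have "k = 0 \<or> k = 1" "i = 0 \<or> j = 0" using assms by auto
  then show ?thesis using assms by (elim disjE) auto
qed

lemma icount: "int (count (sum_mset F) x) = sum_mset (image_mset (\<lambda>A. int (count A x)) F)"
  by (induction F) auto

lemma isize: "int (size F) = sum_mset (image_mset (\<lambda>A. 1::int) F)"
  by (induction F) auto

locale cyc = comm_group G for G (structure) +
  fixes g :: 'a and n :: nat
  assumes g: "g \<in> carrier G" and ordg: "ord g = n" and n4: "4 \<le> n"
begin

definition "e = g [^] (1::int)"
definition "f = g [^] (-1::int)"
definition "a = g [^] (2::int)"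
definition "b = g [^] (-2::int)"
definition w :: "'a \<Rightarrow> int" where
  "w x = (if x = e then 1 else if x = f then -1 else if x = a then 2 else -2)"
definition "W U = sum_mset (image_mset w U)"
definition "B = replicate_mset (n-2) e + replicate_mset (n-2) f + {#a,b#}"

lemma W_add[simp]: "W (U + V) = W U + W V" "W (add_mset x U) = w x + W U" "W {#} = 0"
  by (auto simp: W_def)

lemma pow_eq: "g [^] (i::int) = g [^] (j::int) \<longleftrightarrow> int n dvd (i - j)"
proof -
  have "g [^] i = g [^] j \<otimes> g [^] (i - j)" using g int_pow_mult[of g j "i-j"] by simp
  then have "g [^] i = g [^] j \<longleftrightarrow> g [^] j \<otimes> g [^] (i - j) = g [^] j"
    using g by simp
  also have "\<dots> \<longleftrightarrow> g [^] (i - j) = \<one>" using g by simp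
  also have "\<dots> \<longleftrightarrow> int n dvd (i - j)" using int_pow_eq_id[OF g] ordg by simp
  finally show ?thesis .
qed

lemma ndvd: "k \<noteq> 0 \<Longrightarrow> \<bar>k\<bar> < int n \<Longrightarrow> \<not> int n dvd k"
proof
  assume "k \<noteq> 0" "\<bar>k\<bar> < int n" "int n dvd k"
  then have "\<bar>int n\<bar> \<le> \<bar>k\<bar>" using dvd_imp_le_int by blast
  then show False using \<open>\<bar>k\<bar> < int n\<close> by simp
qed

lemma distinct1: "e \<noteq> f" "e \<noteq> a" "e \<noteq> b" "f \<noteq> a" "f \<noteq> b"
  unfolding e_def f_def a_def b_def pow_eq using ndvd n4 by auto

lemma ab: "a = b \<longleftrightarrow> n = 4"
proof -
  have "a = b \<longleftrightarrow> int n dvd 4" unfolding a_def b_def pow_eq by simp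
  also have "\<dots> \<longleftrightarrow> n = 4" using n4 dvd_imp_le_int[of 4 "int n"] by auto
  finally show ?thesis .
qed

lemma carr: "e \<in> carrier G" "f \<in> carrier G" "a \<in> carrier G" "b \<in> carrier G"
  using g by (auto simp: e_def f_def a_def b_def)

lemma pw: "x \<in> {e,f,a,b} \<Longrightarrow> g [^] w x = x"
  unfolding w_def by (auto simp: e_def f_def a_def b_def)

lemma w_nd: "\<not> int n dvd w x"
  unfolding w_def using ndvd n4 by auto

lemma seq_sum_W: "set_mset U \<subseteq> {e,f,a,b} \<Longrightarrow> seq_sum G U = g [^] W U"
proof (induction U)
  case empty then show ?case by (simp add: seq_sum_empty)
next
  case (add x U)
  have so: "seq_over G U" using add carr by (auto simp: seq_over_def)
  have x: "x \<in> {e,f,a,b}" using add by auto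
  have "seq_sum G (add_mset x U) = x \<otimes> g [^] W U"
    using seq_sum_add[OF so] x carr add by auto
  also have "\<dots> = g [^] (w x + W U)" using pw[OF x] g int_pow_mult by simp
  finally show ?case by simp
qed

lemma zs: "set_mset U \<subseteq> {e,f,a,b} \<Longrightarrow> zero_sum G U \<longleftrightarrow> int n dvd W U"
proof -
  assume U: "set_mset U \<subseteq> {e,f,a,b}"
  then have "seq_over G U" using carr by (auto simp: seq_over_def)
  then show ?thesis
    unfolding zero_sum_def seq_sum_W[OF U] using int_pow_eq_id[OF g] ordg by simp
qed

lemma at2:
  assumes U: "set_mset U \<subseteq> {e,f,a,b}" "size U = 2" "int n dvd W U"
  shows "is_atom G U"
proof (rule is_atomI)
  show "zero_sum G U" using zs assms by simp
  show "U \<noteq> {#}" using assms by auto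
  fix V assume V: "V \<subseteq># U" "V \<noteq> {#}" "V \<noteq> U"
  then have "V \<subset># U" by (simp add: subset_mset.le_less)
  then have "size V < 2" using mset_subset_size assms(2) by fastforce
  moreover have "size V \<noteq> 0" using V(2) by simp
  ultimately have "size V = 1" by linarith
  then obtain x where x: "V = {#x#}" using size_1_singleton_mset by auto
  have "set_mset V \<subseteq> {e,f,a,b}" using V U by (meson mset_subset_eqD subset_iff)
  then show "\<not> zero_sum G V" using zs x w_nd by simp
qed

lemma at_pq:
  assumes xy: "x \<noteq> y" "x \<in> {e,f,a,b}" "y \<in> {e,f,a,b}"
    and A: "A = replicate_mset p x + replicate_mset q y" "p + q > 0"
    and dv: "int n dvd (int p * w x + int q * w y)"
    and ar: "\<And>i j. i \<le> p \<Longrightarrow> j \<le> q \<Longrightarrow> int n dvd (int i * w x + int j * w y)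
               \<Longrightarrow> (i = 0 \<and> j = 0) \<or> (i = p \<and> j = q)"
  shows "is_atom G A"
proof -
  have sA: "set_mset A \<subseteq> {e,f,a,b}" using A xy by auto
  have WA: "W A = int p * w x + int q * w y" using A by (simp add: W_def)
  show ?thesis
  proof (rule is_atomI)
    show "zero_sum G A" using zs[OF sA] WA dv by simp
    show "A \<noteq> {#}" using A by auto
    fix U assume U: "U \<subseteq># A" "U \<noteq> {#}" "U \<noteq> A"
    have sU: "set_mset U \<subseteq> {x,y}"
    proof
      fix z assume "z \<in># U"
      then have "z \<in># A" by (rule mset_subset_eqD[OF U(1)])
      then show "z \<in> {x,y}" using A by (auto split: if_splits)
    qed
    have cx: "count U x \<le> p" using mset_subset_eq_count[OF U(1), of x] A xy(1) by simp
    have cy: "count U y \<le> q" using mset_subset_eq_count[OF U(1), of y] A xy(1) by simp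
    have WU: "W U = int (count U x) * w x + int (count U y) * w y"
      unfolding W_def using sum_over_set[OF _ sU, of w] xy(1) by simp
    have szU: "size U = count U x + count U y" using size_over_set[OF _ sU] xy(1) by simp
    have szA: "size A = p + q" using A by simp
    show "\<not> zero_sum G U"
    proof
      assume "zero_sum G U"
      then have "int n dvd W U" using zs sU xy by auto
      then have "(count U x = 0 \<and> count U y = 0) \<or> (count U x = p \<and> count U y = q)"
        using ar cx cy WU by auto
      then show False
      proof
        assume "count U x = 0 \<and> count U y = 0"
        then have "size U = 0" using szU by simp
        then show False using U(2) by simp
      next
        assume "count U x = p \<and> count U y = q"
        then have "size U = size A" using szU szA by simp
        then show False using subset_size_eq[OF U(1)] U(3) by simp
      qed
    qed
  qed
qed


lemma w_vals: "w e = 1" "w f = -1" "w a = 2" "w b = (if n = 4 then 2 else -2)"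
  using distinct1 ab by (auto simp: w_def)

definition "A1 = replicate_mset 1 a + replicate_mset (n-2) e"
definition "A2 = replicate_mset 1 a + replicate_mset 2 f"
definition "A3 = replicate_mset 1 b + replicate_mset (n-2) f"
definition "A4 = replicate_mset 1 b + replicate_mset 2 e"
definition "P = {#e,f#}"
definition "Q = {#a,b#}"

lemma atP: "is_atom G P"
  unfolding P_def by (rule at2) (auto simp: w_vals)

lemma atQ: "is_atom G Q"
  unfolding Q_def by (rule at2) (auto simp: w_vals)

lemma atA1: "is_atom G A1"
proof (rule at_pq[OF _ _ _ A1_def])
  show "int n dvd int 1 * w a + int (n - 2) * w e" using n4 by (simp add: w_vals of_nat_diff)
  fix i j assume ij: "i \<le> 1" "j \<le> n - 2" "int n dvd int i * w a + int j * w e"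
  then have "int n dvd (2 * int i + int j)" by (simp add: w_vals algebra_simps)
  moreover have "\<bar>2 * int i + int j\<bar> \<le> int n" using Lab ij n4 by blast
  ultimately have "2 * int i + int j = 0 \<or> 2 * int i + int j = int n \<or> 2 * int i + int j = - int n"
      by (intro int_dvd_range) (use n4 in auto)
  then show "i = 0 \<and> j = 0 \<or> i = 1 \<and> j = n - 2" by (rule La[OF ij(1,2) n4])
qed (use distinct1 distinct1[symmetric] n4 in simp_all)

lemma atA2: "is_atom G A2"
proof (rule at_pq[OF _ _ _ A2_def])
  show "int n dvd int 1 * w a + int 2 * w f" by (simp add: w_vals)
  fix i j assume ij: "i \<le> 1" "j \<le> 2" "int n dvd int i * w a + int j * w f"
  then have "int n dvd (2 * int i - int j)" by (simp add: w_vals algebra_simps)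
  moreover have "\<bar>2 * int i - int j\<bar> < int n" using Lba ij n4 by blast
  ultimately have "2 * int i - int j = 0"
    using ndvd by blast
  then show "i = 0 \<and> j = 0 \<or> i = 1 \<and> j = 2" by (rule Lb[OF ij(1,2)])
qed (use distinct1 distinct1[symmetric] n4 in simp_all)

lemma atA3: "is_atom G A3"
proof (rule at_pq[OF _ _ _ A3_def])
  show "int n dvd int 1 * w b + int (n - 2) * w f" using n4
    by (auto simp add: w_vals of_nat_diff)
  fix i j assume ij: "i \<le> 1" "j \<le> n - 2" "int n dvd int i * w b + int j * w f"
  show "i = 0 \<and> j = 0 \<or> i = 1 \<and> j = n - 2"
  proof (cases "n = 4")
    case True
    then have "int n dvd (2 * int i - int j)" using ij by (simp add: w_vals algebra_simps)
    moreover have "\<bar>2 * int i - int j\<bar> < int n" using Lba ij n4 True by simp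
    ultimately have z0: "2 * int i - int j = 0" using ndvd by blast
    have "j \<le> 2" using ij(2) True by simp
    then show ?thesis using Lb[OF ij(1) _ z0] True by simp
  next
    case False
    then have "int n dvd - (2 * int i + int j)" using ij by (simp add: w_vals algebra_simps)
    then have "int n dvd (2 * int i + int j)" by (simp only: dvd_minus_iff)
    moreover have "\<bar>2 * int i + int j\<bar> \<le> int n" using Lab ij n4 by blast
    ultimately have "2 * int i + int j = 0 \<or> 2 * int i + int j = int n \<or> 2 * int i + int j = - int n"
      by (intro int_dvd_range) (use n4 in auto)
    then show ?thesis by (rule La[OF ij(1,2) n4])
  qed
qed (use distinct1 distinct1[symmetric] n4 in simp_all)

lemma atA4: "is_atom G A4"
proof (rule at_pq[OF _ _ _ A4_def])
  show "int n dvd int 1 * w b + int 2 * w e" by (auto simp add: w_vals)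
  fix i j assume ij: "i \<le> 1" "j \<le> 2" "int n dvd int i * w b + int j * w e"
  show "i = 0 \<and> j = 0 \<or> i = 1 \<and> j = 2"
  proof (cases "n = 4")
    case True
    then have "int n dvd (2 * int i + int j)" using ij by (simp add: w_vals algebra_simps)
    moreover have j2: "j \<le> n - 2" using ij True by simp
    moreover have "\<bar>2 * int i + int j\<bar> \<le> int n" using Lab ij(1) j2 n4 by blast
    ultimately have "2 * int i + int j = 0 \<or> 2 * int i + int j = int n \<or> 2 * int i + int j = - int n"
      by (intro int_dvd_range) (use n4 in auto)
    then show ?thesis using La[OF ij(1) j2 n4] True by simp
  next
    case False
    then have "int n dvd (int j - 2 * int i)" using ij by (simp add: w_vals algebra_simps)
    moreover have "\<bar>int j - 2 * int i\<bar> < int n" using Lba[OF ij(1,2) n4] by simp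
    ultimately have "int j - 2 * int i = 0" using ndvd by blast
    then show ?thesis using Lb[OF ij(1,2)] by simp
  qed
qed (use distinct1 distinct1[symmetric] n4 in simp_all)

lemma B_zs: "zero_sum G B"
proof -
  have "set_mset B \<subseteq> {e,f,a,b}" by (auto simp: B_def)
  moreover have "W B = (if n = 4 then 4 else 0)" using n4 by (auto simp: B_def W_def w_vals)
  ultimately show ?thesis using zs by simp
qed

lemma lengths_sup: "{2, n-2, n-1} \<subseteq> lengths G B"
proof -
  have "2 \<in> lengths G B"
    unfolding lengths_def
    apply (rule CollectI, rule exI[of _ "{#A1, A3#}"])
    using atA1 atA3 n4 by (auto simp: A1_def A3_def B_def intro!: multiset_eqI)
  moreover have "n - 2 \<in> lengths G B"
    unfolding lengths_def
    apply (rule CollectI, rule exI[of _ "{#A2, A4#} + replicate_mset (n-4) P"])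
    using atA2 atA4 atP n4 by (auto simp: A2_def A4_def B_def P_def sum_rep intro!: multiset_eqI)
  moreover have "n - 1 \<in> lengths G B"
    unfolding lengths_def
    apply (rule CollectI, rule exI[of _ "add_mset Q (replicate_mset (n-2) P)"])
    using atQ atP n4 by (auto simp: Q_def B_def P_def sum_rep intro!: multiset_eqI)
  ultimately show ?thesis by auto
qed


lemma atom_Z:
  assumes at: "is_atom G A" and Z: "Z \<subseteq># A" "Z \<noteq> {#}" and sA: "set_mset A \<subseteq> {e,f,a,b}"
    and dZ: "int n dvd W Z"
  shows "A = Z"
proof (rule ccontr)
  assume ne: "A \<noteq> Z"
  obtain V where V: "A = Z + V" using Z(1) by (metis subset_mset.le_iff_add)
  have "int n dvd W A" using at sA zs by (auto simp: is_atom_def)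
  then have dV: "int n dvd W V" using dZ V by (simp add: dvd_add_right_iff)
  have sZ: "set_mset Z \<subseteq> {e,f,a,b}" "set_mset V \<subseteq> {e,f,a,b}" using sA V by auto
  have "V \<noteq> {#}" using V ne by auto
  moreover have "zero_sum G Z" "zero_sum G V" using zs sZ dZ dV by auto
  ultimately show False using at V Z(2) unfolding is_atom_def by blast
qed

definition "tv A = (count A e, count A f, count A a, count A b)"

lemma mem_sub: "A \<in># F \<Longrightarrow> A \<subseteq># sum_mset F"
  by (metis mset_subset_eq_add_left sum_mset.remove)

lemma class5:
  assumes n5: "n \<noteq> 4" and at: "is_atom G A" and AB: "A \<subseteq># B"
  shows "tv A \<in> {(1,1,0,0),(0,0,1,1),(n-2,0,1,0),(0,2,1,0),(0,n-2,0,1),(2,0,0,1)}"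
proof -
  have ab': "a \<noteq> b" using ab n5 by simp
  note dist = distinct1 ab' distinct1[symmetric] ab'[symmetric]
  have sA: "set_mset A \<subseteq> {e,f,a,b}"
  proof
    fix z assume "z \<in># A"
    then have "z \<in># B" by (rule mset_subset_eqD[OF AB])
    then show "z \<in> {e,f,a,b}" by (auto simp: B_def split: if_splits)
  qed
  define i where "i = count A e"
  define j where "j = count A f"
  define k where "k = count A a"
  define l where "l = count A b"
  have bi: "i \<le> n - 2" using mset_subset_eq_count[OF AB, of e] dist by (simp add: i_def B_def)
  have bj: "j \<le> n - 2" using mset_subset_eq_count[OF AB, of f] dist by (simp add: j_def B_def)
  have bk: "k \<le> 1" using mset_subset_eq_count[OF AB, of a] dist by (simp add: k_def B_def)
  have bl: "l \<le> 1" using mset_subset_eq_count[OF AB, of b] dist by (simp add: l_def B_def)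
  have WA0: "W A = (\<Sum>x\<in>{e,f,a,b}. of_nat (count A x) * w x)"
    unfolding W_def by (rule sum_over_set[OF _ sA]) simp
  have WA: "W A = int i - int j + 2 * int k - 2 * int l"
    unfolding WA0 using dist
    by (simp add: i_def j_def k_def l_def w_vals n5)
  have szA0: "size A = (\<Sum>x\<in>{e,f,a,b}. count A x)"
    by (rule size_over_set[OF _ sA]) simp
  have szA: "size A = i + j + k + l"
    unfolding szA0 using dist by (simp add: i_def j_def k_def l_def)
  have ne: "A \<noteq> {#}" using at by (simp add: is_atom_def)
  then have pos: "i + j + k + l > 0" using szA by (metis add_gr_0 nonempty_has_size)
  have dA: "int n dvd W A" using at sA zs by (auto simp: is_atom_def)
  have tvA: "tv A = (i,j,k,l)" by (simp add: tv_def i_def j_def k_def l_def)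
  show ?thesis
  proof (cases "i \<ge> 1 \<and> j \<ge> 1")
    case True
    have "P \<subseteq># A" using True dist
      by (auto simp: P_def subseteq_mset_def i_def j_def)
    moreover have "int n dvd W P" by (simp add: P_def w_vals)
    ultimately have "A = P" using atom_Z[OF at _ _ sA] by (auto simp: P_def)
    then show ?thesis using dist by (simp add: tv_def P_def)
  next
    case F1: False
    show ?thesis
    proof (cases "k \<ge> 1 \<and> l \<ge> 1")
      case True
      have "Q \<subseteq># A" using True dist
        by (auto simp: Q_def subseteq_mset_def k_def l_def)
      moreover have "int n dvd W Q" by (simp add: Q_def w_vals n5)
      ultimately have "A = Q" using atom_Z[OF at _ _ sA] by (auto simp: Q_def)
      then show ?thesis using dist by (simp add: tv_def Q_def)
    next
      case F2: False
      have "\<bar>W A\<bar> \<le> int n" using WA bi bj bk bl n4 by auto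
      then have "W A = 0 \<or> W A = int n \<or> W A = - int n"
        using int_dvd_range[OF dA] n4 by auto
      then have "(i,j,k,l) \<in> {(1,1,0,0),(0,0,1,1),(n-2,0,1,0),(0,2,1,0),(0,n-2,0,1),(2,0,0,1)}"
        by (rule ar5[OF bi bj bk bl n4 F1 F2 pos WA])
      then show ?thesis using tvA by simp
    qed
  qed
qed


definition "tv4 A = (count A e, count A f, count A a)"

lemma class4:
  assumes n4': "n = 4" and at: "is_atom G A" and AB: "A \<subseteq># B"
  shows "tv4 A \<in> {(1,1,0),(0,0,2),(2,0,1),(0,2,1)}"
proof -
  have ab': "b = a" using ab n4' by simp
  note dist = distinct1 distinct1[symmetric]
  have sA: "set_mset A \<subseteq> {e,f,a}"
  proof
    fix z assume "z \<in># A"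
    then have "z \<in># B" by (rule mset_subset_eqD[OF AB])
    then show "z \<in> {e,f,a}" using ab' by (auto simp: B_def split: if_splits)
  qed
  then have sA': "set_mset A \<subseteq> {e,f,a,b}" by auto
  define i where "i = count A e"
  define j where "j = count A f"
  define k where "k = count A a"
  have "i \<le> n - 2" using mset_subset_eq_count[OF AB, of e] dist by (simp add: i_def B_def)
  then have bi: "i \<le> 2" using n4' by simp
  have "j \<le> n - 2" using mset_subset_eq_count[OF AB, of f] dist by (simp add: j_def B_def)
  then have bj: "j \<le> 2" using n4' by simp
  have bk: "k \<le> 2" using mset_subset_eq_count[OF AB, of a] dist ab' by (simp add: k_def B_def)
  have WA0: "W A = (\<Sum>x\<in>{e,f,a}. of_nat (count A x) * w x)"
    unfolding W_def by (rule sum_over_set[OF _ sA]) simp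
  have WA: "W A = int i - int j + 2 * int k"
    unfolding WA0 using dist
    by (simp add: i_def j_def k_def w_vals)
  have szA0: "size A = (\<Sum>x\<in>{e,f,a}. count A x)"
    by (rule size_over_set[OF _ sA]) simp
  have szA: "size A = i + j + k"
    unfolding szA0 using dist by (simp add: i_def j_def k_def)
  have ne: "A \<noteq> {#}" using at by (simp add: is_atom_def)
  then have pos: "i + j + k > 0" using szA by (metis add_gr_0 nonempty_has_size)
  have dA: "int n dvd W A" using at sA' zs by (auto simp: is_atom_def)
  have tvA: "tv4 A = (i,j,k)" by (simp add: tv4_def i_def j_def k_def)
  show ?thesis
  proof (cases "i \<ge> 1 \<and> j \<ge> 1")
    case True
    have "P \<subseteq># A" using True dist
      by (auto simp: P_def subseteq_mset_def i_def j_def)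
    moreover have "int n dvd W P" by (simp add: P_def w_vals)
    ultimately have "A = P" using atom_Z[OF at _ _ sA'] by (auto simp: P_def)
    then show ?thesis using dist by (simp add: tv4_def P_def)
  next
    case F1: False
    show ?thesis
    proof (cases "k = 2")
      case True
      have "Q \<subseteq># A" using True dist ab'
        by (auto simp: Q_def subseteq_mset_def k_def)
      moreover have "int n dvd W Q" using n4' ab' by (simp add: Q_def w_vals)
      ultimately have "A = Q" using atom_Z[OF at _ _ sA'] by (auto simp: Q_def)
      then show ?thesis using dist ab' by (simp add: tv4_def Q_def)
    next
      case F2: False
      then have bk': "k \<le> 1" using bk by simp
      have "\<bar>W A\<bar> \<le> int n" using WA bi bj bk' n4' by auto
      then have "W A = 0 \<or> W A = int n \<or> W A = - int n"
        using int_dvd_range[OF dA] n4 by auto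
      then have "W A = 0 \<or> W A = 4 \<or> W A = - 4" using n4' by simp
      then have "(i,j,k) \<in> {(1,1,0),(0,0,2),(2,0,1),(0,2,1)}"
        by (rule ar4[OF bi bj bk' F1 pos WA])
      then show ?thesis using tvA by simp
    qed
  qed
qed

lemma lengths_sub: "lengths G B \<subseteq> {2, n-2, n-1}"
proof
  fix s assume "s \<in> lengths G B"
  then obtain F where F: "size F = s" "\<And>A. A \<in># F \<Longrightarrow> is_atom G A" "sum_mset F = B"
    by (auto simp: lengths_def)
  have sub: "\<And>A. A \<in># F \<Longrightarrow> A \<subseteq># B" using mem_sub F(3) by metis
  note dist = distinct1 distinct1[symmetric]
  have Sz: "int s = sum_mset (image_mset (\<lambda>A. 1::int) F)" using isize F(1) by metis
  have Ce: "int (count B e) = sum_mset (image_mset (\<lambda>A. int (count A e)) F)" using icount F(3) by metis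
  have Cf: "int (count B f) = sum_mset (image_mset (\<lambda>A. int (count A f)) F)" using icount F(3) by metis
  have Ca: "int (count B a) = sum_mset (image_mset (\<lambda>A. int (count A a)) F)" using icount F(3) by metis
  have Cb: "int (count B b) = sum_mset (image_mset (\<lambda>A. int (count A b)) F)" using icount F(3) by metis
  show "s \<in> {2, n-2, n-1}"
  proof (cases "n = 4")
    case False
    have ab': "a \<noteq> b" using ab False by simp
    define T where "T = {(1,1,0,0),(0,0,1,1),(n-2,0,1,0),(0,2,1,0),(0,n-2,0,1),(2::nat,0::nat,0::nat,1::nat)}"
    define V where "V = image_mset tv F"
    have sV: "set_mset V \<subseteq> T"
    proof
      fix v assume "v \<in># V"
      then obtain A where A: "A \<in># F" "v = tv A" unfolding V_def by auto
      have "tv A \<in> T" unfolding T_def by (rule class5[OF False F(2)[OF A(1)] sub[OF A(1)]])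
      then show "v \<in> T" using A(2) by simp
    qed
    have fT: "finite T" by (simp add: T_def)
    have key: "\<And>h :: _ \<Rightarrow> int. sum_mset (image_mset (\<lambda>A. h (tv A)) F) = (\<Sum>v\<in>T. of_nat (count V v) * h v)"
    proof -
      fix h :: "nat \<times> nat \<times> nat \<times> nat \<Rightarrow> int"
      have "sum_mset (image_mset (\<lambda>A. h (tv A)) F) = sum_mset (image_mset h V)"
        by (simp add: V_def image_mset.compositionality o_def)
      also have "\<dots> = (\<Sum>v\<in>T. of_nat (count V v) * h v)" by (rule sum_over_set[OF fT sV])
      finally show "sum_mset (image_mset (\<lambda>A. h (tv A)) F) = (\<Sum>v\<in>T. of_nat (count V v) * h v)" .
    qed
    have e1: "int (n-2) = (\<Sum>v\<in>T. of_nat (count V v) * int (fst v))"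
      using Ce key[of "\<lambda>v. int (fst v)"] dist ab' by (simp add: B_def tv_def)
    have e2: "int (n-2) = (\<Sum>v\<in>T. of_nat (count V v) * int (fst (snd v)))"
      using Cf key[of "\<lambda>v. int (fst (snd v))"] dist ab' by (simp add: B_def tv_def)
    have e3: "1 = (\<Sum>v\<in>T. of_nat (count V v) * int (fst (snd (snd v))))"
      using Ca key[of "\<lambda>v. int (fst (snd (snd v)))"] dist ab' by (simp add: B_def tv_def)
    have e4: "1 = (\<Sum>v\<in>T. of_nat (count V v) * int (snd (snd (snd v))))"
      using Cb key[of "\<lambda>v. int (snd (snd (snd v)))"] dist ab' by (simp add: B_def tv_def)
    have e5: "int s = (\<Sum>v\<in>T. of_nat (count V v) * 1)"
      using Sz key[of "\<lambda>v. 1"] by simp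
    have sT: "\<And>\<phi> :: _ \<Rightarrow> int. (\<Sum>v\<in>T. \<phi> v) = \<phi> (1,1,0,0) + \<phi> (0,0,1,1) + \<phi> (n-2,0,1,0)
        + \<phi> (0,2,1,0) + \<phi> (0,n-2,0,1) + \<phi> (2,0,0,1)"
      unfolding T_def by (simp add: add.assoc)
    have e1': "int (n-2) = int (count V (1,1,0,0)) + int (count V (n-2,0,1,0)) * int (n-2) + 2 * int (count V (2,0,0,1))"
      using e1 unfolding sT by simp
    have e2': "int (n-2) = int (count V (1,1,0,0)) + 2 * int (count V (0,2,1,0)) + int (count V (0,n-2,0,1)) * int (n-2)"
      using e2 unfolding sT by simp
    have e3': "1 = int (count V (0,0,1,1)) + int (count V (n-2,0,1,0)) + int (count V (0,2,1,0))"
      using e3 unfolding sT by simp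
    have e4': "1 = int (count V (0,0,1,1)) + int (count V (0,n-2,0,1)) + int (count V (2,0,0,1))"
      using e4 unfolding sT by simp
    have e5': "int s = int (count V (1,1,0,0)) + int (count V (0,0,1,1)) + int (count V (n-2,0,1,0))
        + int (count V (0,2,1,0)) + int (count V (0,n-2,0,1)) + int (count V (2,0,0,1))"
      using e5 unfolding sT by simp
    show ?thesis
      by (rule arc5[OF n4 _ _ e3' e4' e5']) (use e1' e2' in \<open>simp_all add: mult.commute\<close>)
  next
    case True
    have ab': "b = a" using ab True by simp
    have cBe: "count B e = n - 2" using dist by (simp add: B_def)
    have cBf: "count B f = n - 2" using dist by (simp add: B_def)
    have cBa: "count B a = 2" using dist ab' by (simp add: B_def)
    define T where "T = {(1,1,0),(0,0,2),(2,0,1),(0::nat,2::nat,1::nat)}"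
    define V where "V = image_mset tv4 F"
    have sV: "set_mset V \<subseteq> T"
    proof
      fix v assume "v \<in># V"
      then obtain A where A: "A \<in># F" "v = tv4 A" unfolding V_def by auto
      have "tv4 A \<in> T" unfolding T_def by (rule class4[OF True F(2)[OF A(1)] sub[OF A(1)]])
      then show "v \<in> T" using A(2) by simp
    qed
    have fT: "finite T" by (simp add: T_def)
    have key: "\<And>h :: _ \<Rightarrow> int. sum_mset (image_mset (\<lambda>A. h (tv4 A)) F) = (\<Sum>v\<in>T. of_nat (count V v) * h v)"
    proof -
      fix h :: "nat \<times> nat \<times> nat \<Rightarrow> int"
      have "sum_mset (image_mset (\<lambda>A. h (tv4 A)) F) = sum_mset (image_mset h V)"
        by (simp add: V_def image_mset.compositionality o_def)
      also have "\<dots> = (\<Sum>v\<in>T. of_nat (count V v) * h v)" by (rule sum_over_set[OF fT sV])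
      finally show "sum_mset (image_mset (\<lambda>A. h (tv4 A)) F) = (\<Sum>v\<in>T. of_nat (count V v) * h v)" .
    qed
    have e1: "2 = (\<Sum>v\<in>T. of_nat (count V v) * int (fst v))"
      using Ce key[of "\<lambda>v. int (fst v)"] cBe True by (simp add: tv4_def)
    have e2: "2 = (\<Sum>v\<in>T. of_nat (count V v) * int (fst (snd v)))"
      using Cf key[of "\<lambda>v. int (fst (snd v))"] cBf True by (simp add: tv4_def)
    have e3: "2 = (\<Sum>v\<in>T. of_nat (count V v) * int (snd (snd v)))"
      using Ca key[of "\<lambda>v. int (snd (snd v))"] cBa True by (simp add: tv4_def)
    have e5: "int s = (\<Sum>v\<in>T. of_nat (count V v) * 1)"
      using Sz key[of "\<lambda>v. 1"] by simp
    have sT: "\<And>\<phi> :: _ \<Rightarrow> int. (\<Sum>v\<in>T. \<phi> v) = \<phi> (1,1,0) + \<phi> (0,0,2) + \<phi> (2,0,1) + \<phi> (0,2,1)"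
      unfolding T_def by (simp add: add.assoc)
    have e1': "2 = int (count V (1,1,0)) + 2 * int (count V (2,0,1))"
      using e1 unfolding sT by simp
    have e2': "2 = int (count V (1,1,0)) + 2 * int (count V (0,2,1))"
      using e2 unfolding sT by simp
    have e3': "2 = 2 * int (count V (0,0,2)) + int (count V (2,0,1)) + int (count V (0,2,1))"
      using e3 unfolding sT by simp
    have e5': "int s = int (count V (1,1,0)) + int (count V (0,0,2)) + int (count V (2,0,1)) + int (count V (0,2,1))"
      using e5 unfolding sT by simp
    have "s \<in> {2,3}"
      by (rule arc4[OF e1' e2' e3' e5'])
    then show ?thesis using True by auto
  qed
qed

end

theorem lemma4p2:
  fixes G :: "('a, 'b) monoid_scheme" and n :: nat
  assumes "group G" and "cyclic_group G" and "order G = n" and "n \<ge> 4"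
  shows "{2, n - 2, n - 1} \<in> system_of_lengths G"
proof -
  interpret group G by fact
  have cg: "comm_group G" using cyclic_imp_abelian_group assms(2) by blast
  obtain x where x: "x \<in> carrier G" "subgroup_generated G {x} = G"
    using assms(2) unfolding cyclic_group_def by blast
  have ox: "ord x = n" using cyclic_order_is_ord[OF x(1)] x(2) assms(3) by simp
  interpret C: cyc G x n
    by (rule cyc.intro[OF cg]) (unfold_locales, use x ox assms(4) in auto)
  have "lengths G C.B = {2, n - 2, n - 1}" using C.lengths_sub C.lengths_sup by blast
  then show ?thesis using C.B_zs unfolding system_of_lengths_def by blast
qed

end
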